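(* For any constant $\beta\in\mathbb R$, the system $\dot I=\varepsilon(\beta\sin\theta+1)$, $\dot\theta=I$, $(I,\theta)\in\mathbb R\times\mathbb T$, has no non-constant real-analytic first integral depending analytically on $\varepsilon$ near $\varepsilon=0$.
   Context: $\mathbb T=\mathbb R/2\pi\mathbb Z$; $\varepsilon$ is a small real parameter. *)

theory Defs
  imports "HOL-Analysis.Analysis"
begin

definition real_analytic3_on ::
  "(real \<Rightarrow> real \<Rightarrow> real \<Rightarrow> real) \<Rightarrow> (real \<times> real \<times> real) set \<Rightarrow> bool" where
  "real_analytic3_on F S \<longleftrightarrow>
     (\<forall>p\<in>S. \<exists>r>0. ball p r \<subseteq> S \<and>
        (\<exists>a :: nat \<times> nat \<times> nat \<Rightarrow> real.
           \<forall>x\<in>ball p r.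
             ((\<lambda>(i,j,k). a (i,j,k) * (fst x - fst p) ^ i
                  * (fst (snd x) - fst (snd p)) ^ j
                  * (snd (snd x) - snd (snd p)) ^ k)
               has_sum F (fst x) (fst (snd x)) (snd (snd x))) UNIV))"

text \<open>G (a function of (I, theta), theta taken modulo 2 pi via its lift to R)
  is a first integral of  I' = eps (beta sin theta + 1), theta' = I :
  it is constant along every solution.\<close>
definition first_integral :: "real \<Rightarrow> real \<Rightarrow> (real \<Rightarrow> real \<Rightarrow> real) \<Rightarrow> bool" where
  "first_integral \<beta> \<epsilon> G \<longleftrightarrow>
     (\<forall>x y :: real \<Rightarrow> real.
        (\<forall>t. (x has_real_derivative \<epsilon> * (\<beta> * sin (y t) + 1)) (at t) \<and>
             (y has_real_derivative x t) (at t))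
        \<longrightarrow> (\<forall>t. G (x t) (y t) = G (x 0) (y 0)))"

end

theory Submission
  imports Defs
begin

definition prim :: "(real \<Rightarrow> real) \<Rightarrow> real \<Rightarrow> real" where
  "prim h = (SOME P. P 0 = 0 \<and> (\<forall>t. (P has_real_derivative h t) (at t)))"

lemma prim_ex:
  fixes h :: "real \<Rightarrow> real"
  assumes "continuous_on UNIV h"
  shows "\<exists>P. P 0 = 0 \<and> (\<forall>t. (P has_real_derivative h t) (at t))"
proof -
  have "\<exists>F. \<forall>x :: real. (-\<infinity>::ereal) < x \<longrightarrow> x < (\<infinity>::ereal) \<longrightarrow> (F has_vector_derivative h x) (at x)"
    by (rule einterval_antiderivative) (use assms in \<open>auto simp: continuous_on_eq_continuous_at\<close>)
  then obtain F where F: "\<And>x. (F has_vector_derivative h x) (at x)" by auto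
  show ?thesis
    apply (rule exI[of _ "\<lambda>t. F t - F 0"])
    using F by (auto simp: has_real_derivative_iff_has_vector_derivative intro!: derivative_eq_intros)
qed

lemma prim:
  fixes h :: "real \<Rightarrow> real"
  assumes "continuous_on UNIV h"
  shows "prim h 0 = 0" "(prim h has_real_derivative h t) (at t)"
  using someI_ex[OF prim_ex[OF assms]] unfolding prim_def by auto

lemma comp_pos:
  fixes A a :: "real \<Rightarrow> real"
  assumes "t \<ge> 0" "A 0 = 0" "\<And>s. (A has_real_derivative a s) (at s)"
    and "\<And>s. \<bar>a s\<bar> \<le> c * \<bar>s\<bar> ^ m / fact m"
  shows "\<bar>A t\<bar> \<le> c * t ^ Suc m / fact (Suc m)"
proof -
  define G where "G s = c * s ^ Suc m / fact (Suc m)" for s :: real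
  have dG: "(G has_real_derivative c * s ^ m / fact m) (at s)" for s
    unfolding G_def
    by (rule derivative_eq_intros refl | simp)+
  have "G 0 - A 0 \<le> G t - A t"
    apply (rule DERIV_nonneg_imp_nondecreasing[OF assms(1)])
    subgoal for x
      apply (rule exI[of _ "c * x ^ m / fact m - a x"])
      using dG[of x] assms(3)[of x] assms(4)[of x] \<open>t\<ge>0\<close>
      by (auto intro!: derivative_eq_intros simp: abs_le_iff)
    done
  moreover have "G 0 + A 0 \<le> G t + A t"
    apply (rule DERIV_nonneg_imp_nondecreasing[OF assms(1)])
    subgoal for x
      apply (rule exI[of _ "c * x ^ m / fact m + a x"])
      using dG[of x] assms(3)[of x] assms(4)[of x] \<open>t\<ge>0\<close>
      by (auto intro!: derivative_eq_intros simp: abs_le_iff)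
    done
  ultimately show ?thesis using assms(2) by (simp add: G_def abs_le_iff)
qed

lemma comp_abs:
  fixes A a :: "real \<Rightarrow> real"
  assumes "A 0 = 0" "\<And>s. (A has_real_derivative a s) (at s)"
    and "\<And>s. \<bar>a s\<bar> \<le> c * \<bar>s\<bar> ^ m / fact m"
  shows "\<bar>A t\<bar> \<le> c * \<bar>t\<bar> ^ Suc m / fact (Suc m)"
proof (cases "t \<ge> 0")
  case True
  then show ?thesis using comp_pos[OF True assms] by simp
next
  case False
  have "\<bar>(\<lambda>s. A (- s)) (-t)\<bar> \<le> c * (-t) ^ Suc m / fact (Suc m)"
  proof (rule comp_pos[where a="\<lambda>s. - a (- s)"])
    show "((\<lambda>s. A (- s)) has_real_derivative - a (- s)) (at s)" for s
      using DERIV_chain2[OF assms(2)[of "-s"] DERIV_minus[OF DERIV_ident, of s]] by simp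
    show "\<bar>- a (- s)\<bar> \<le> c * \<bar>s\<bar> ^ m / fact m" for s
      using assms(3)[of "-s"] by simp
  qed (use False assms(1) in auto)
  then show ?thesis using False by simp
qed

lemma abs_sin_diff: "\<bar>sin (u::real) - sin v\<bar> \<le> \<bar>u - v\<bar>"
proof -
  have "\<bar>sin u - sin v\<bar> = 2 * \<bar>sin ((u - v) / 2)\<bar> * \<bar>cos ((u + v) / 2)\<bar>"
    by (simp add: sin_diff_sin abs_mult)
  also have "\<dots> \<le> 2 * \<bar>(u - v) / 2\<bar> * 1"
    by (intro mult_mono abs_sin_x_le_abs_x) auto
  finally show ?thesis by simp
qed

lemma aux_arith: "(a::real) * c * q * z / f + c * q * z / f = c * ((1 + a) * q) * z / f"
  by (simp add: add_divide_distrib[symmetric] algebra_simps)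

fun pic :: "real \<Rightarrow> real \<Rightarrow> real \<Rightarrow> real \<Rightarrow> nat \<Rightarrow> (real \<Rightarrow> real) \<times> (real \<Rightarrow> real)" where
  "pic e b x0 y0 0 = ((\<lambda>_. x0), (\<lambda>_. y0))"
| "pic e b x0 y0 (Suc n) =
     ((\<lambda>t. x0 + prim (\<lambda>s. e * (b * sin (snd (pic e b x0 y0 n) s) + 1)) t),
      (\<lambda>t. y0 + prim (fst (pic e b x0 y0 n)) t))"

context
  fixes e b x0 y0 :: real
begin

abbreviation "X n \<equiv> fst (pic e b x0 y0 n)"
abbreviation "Y n \<equiv> snd (pic e b x0 y0 n)"

lemma pic_cont: "continuous_on UNIV (X n) \<and> continuous_on UNIV (Y n)"
proof (induction n)
  case 0
  then show ?case by simp
next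
  case (Suc n)
  have c1: "continuous_on UNIV (\<lambda>s. e * (b * sin (Y n s) + 1))"
    using Suc by (auto intro!: continuous_intros)
  have c2: "continuous_on UNIV (X n)" using Suc by simp
  have "(X (Suc n) has_real_derivative e * (b * sin (Y n t) + 1)) (at t)" for t
    using prim(2)[OF c1] by (auto intro!: derivative_eq_intros)
  then have "continuous_on UNIV (X (Suc n))"
    by (meson DERIV_isCont continuous_at_imp_continuous_on)
  moreover have "(Y (Suc n) has_real_derivative X n t) (at t)" for t
    using prim(2)[OF c2] by (auto intro!: derivative_eq_intros)
  then have "continuous_on UNIV (Y (Suc n))"
    by (meson DERIV_isCont continuous_at_imp_continuous_on)
  ultimately show ?case by simp
qed

lemma pic_deriv:
  "(X (Suc n) has_real_derivative e * (b * sin (Y n t) + 1)) (at t)"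
  "(Y (Suc n) has_real_derivative X n t) (at t)"
  "X (Suc n) 0 = x0" "Y (Suc n) 0 = y0"
proof -
  have c1: "continuous_on UNIV (\<lambda>s. e * (b * sin (Y n s) + 1))"
    using pic_cont[of n] by (auto intro!: continuous_intros)
  have c2: "continuous_on UNIV (X n)" using pic_cont[of n] by simp
  show "(X (Suc n) has_real_derivative e * (b * sin (Y n t) + 1)) (at t)"
    using prim(2)[OF c1] by (auto intro!: derivative_eq_intros)
  show "(Y (Suc n) has_real_derivative X n t) (at t)"
    using prim(2)[OF c2] by (auto intro!: derivative_eq_intros)
  show "X (Suc n) 0 = x0" "Y (Suc n) 0 = y0" using prim(1)[OF c1] prim(1)[OF c2] by auto
qed

declare pic.simps(2)[simp del]

lemma pic_0: "X n 0 = x0" "Y n 0 = y0"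
  by (cases n; simp add: pic_deriv)+

definition "CC = \<bar>e * (b * sin y0 + 1)\<bar> + \<bar>x0\<bar>"
definition "KK = 1 + \<bar>e * b\<bar>"

lemma pic_bound:
  "\<bar>X (Suc n) t - X n t\<bar> + \<bar>Y (Suc n) t - Y n t\<bar> \<le> CC * KK ^ n * \<bar>t\<bar> ^ Suc n / fact (Suc n)"
proof (induction n arbitrary: t)
  case 0
  have "\<bar>X 1 t - X 0 t\<bar> \<le> \<bar>e * (b * sin y0 + 1)\<bar> * \<bar>t\<bar> ^ Suc 0 / fact (Suc 0)"
    by (rule comp_abs[where A="\<lambda>t. X 1 t - X 0 t" and a="\<lambda>_. e * (b * sin y0 + 1)"])
       (use DERIV_diff[OF pic_deriv(1)[of 0] DERIV_const[of x0]] pic_0[of 1] pic_0[of 0] in auto)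
  moreover have "\<bar>Y 1 t - Y 0 t\<bar> \<le> \<bar>x0\<bar> * \<bar>t\<bar> ^ Suc 0 / fact (Suc 0)"
    by (rule comp_abs[where A="\<lambda>t. Y 1 t - Y 0 t" and a="\<lambda>_. x0"])
       (use DERIV_diff[OF pic_deriv(2)[of 0] DERIV_const[of y0]] pic_0[of 1] pic_0[of 0] in auto)
  ultimately show ?case by (simp add: CC_def algebra_simps)
next
  case (Suc n)
  have h1: "\<bar>X (Suc (Suc n)) t - X (Suc n) t\<bar> \<le> (\<bar>e * b\<bar> * CC * KK ^ n) * \<bar>t\<bar> ^ Suc (Suc n) / fact (Suc (Suc n))"
  proof (rule comp_abs[where a="\<lambda>s. e * b * (sin (Y (Suc n) s) - sin (Y n s))"])
    show "((\<lambda>s. X (Suc (Suc n)) s - X (Suc n) s) has_real_derivative e * b * (sin (Y (Suc n) s) - sin (Y n s))) (at s)" for s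
      using DERIV_diff[OF pic_deriv(1)[of "Suc n" s] pic_deriv(1)[of n s]] by (simp add: algebra_simps)
    show "\<bar>e * b * (sin (Y (Suc n) s) - sin (Y n s))\<bar> \<le> \<bar>e * b\<bar> * CC * KK ^ n * \<bar>s\<bar> ^ Suc n / fact (Suc n)" for s
    proof -
      have "\<bar>e * b * (sin (Y (Suc n) s) - sin (Y n s))\<bar> \<le> \<bar>e * b\<bar> * \<bar>Y (Suc n) s - Y n s\<bar>"
        by (simp add: abs_mult abs_sin_diff mult_left_mono)
      also have "\<dots> \<le> \<bar>e * b\<bar> * (CC * KK ^ n * \<bar>s\<bar> ^ Suc n / fact (Suc n))"
        using Suc.IH[of s] by (intro mult_left_mono) auto
      finally show ?thesis by simp
    qed
  qed (simp add: pic_0)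
  have h2: "\<bar>Y (Suc (Suc n)) t - Y (Suc n) t\<bar> \<le> (CC * KK ^ n) * \<bar>t\<bar> ^ Suc (Suc n) / fact (Suc (Suc n))"
  proof (rule comp_abs[where a="\<lambda>s. X (Suc n) s - X n s"])
    show "((\<lambda>s. Y (Suc (Suc n)) s - Y (Suc n) s) has_real_derivative X (Suc n) s - X n s) (at s)" for s
      using DERIV_diff[OF pic_deriv(2)[of "Suc n" s] pic_deriv(2)[of n s]] by simp
    show "\<bar>X (Suc n) s - X n s\<bar> \<le> CC * KK ^ n * \<bar>s\<bar> ^ Suc n / fact (Suc n)" for s
      using Suc.IH[of s] by linarith
  qed (simp add: pic_0)
  have h3: "\<bar>e * b\<bar> * CC * KK ^ n * \<bar>t\<bar> ^ Suc (Suc n) / fact (Suc (Suc n))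
      + CC * KK ^ n * \<bar>t\<bar> ^ Suc (Suc n) / fact (Suc (Suc n))
      = CC * KK ^ Suc n * \<bar>t\<bar> ^ Suc (Suc n) / fact (Suc (Suc n))"
    by (simp only: KK_def power_Suc aux_arith)
  show ?case using add_mono[OF h1 h2] unfolding h3 by (simp only: mult.assoc)
qed


lemma summable_M: "summable (\<lambda>n. CC * KK ^ n * T ^ Suc n / fact (Suc n))"
proof -
  have KK: "KK > 0" by (simp add: KK_def add_pos_nonneg)
  have "summable (\<lambda>n. inverse (fact (n + 1)) * (KK * T) ^ (n + 1))"
    using summable_ignore_initial_segment[OF summable_exp[of "KK * T"], of 1] .
  then have "summable (\<lambda>n. CC / KK * (inverse (fact (n + 1)) * (KK * T) ^ (n + 1)))"
    by (rule summable_mult)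
  moreover have "CC / KK * (inverse (fact (n + 1)) * (KK * T) ^ (n + 1)) = CC * KK ^ n * T ^ Suc n / fact (Suc n)" for n
    using KK by (simp add: power_mult_distrib field_simps)
  ultimately show ?thesis by simp
qed

lemma tele_ulim:
  fixes f :: "nat \<Rightarrow> real \<Rightarrow> real"
  assumes "\<And>n t. t \<in> S \<Longrightarrow> \<bar>f (Suc n) t - f n t\<bar> \<le> M n" "summable M"
  shows "uniform_limit S f (\<lambda>t. f 0 t + (\<Sum>i. f (Suc i) t - f i t)) sequentially"
proof -
  have u: "uniform_limit S (\<lambda>n t. \<Sum>i<n. f (Suc i) t - f i t) (\<lambda>t. \<Sum>i. f (Suc i) t - f i t) sequentially"
    by (rule Weierstrass_m_test) (use assms in auto)
  show ?thesis
  proof (rule uniform_limitI)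
    fix \<epsilon> :: real assume "\<epsilon> > 0"
    have tel: "(\<Sum>i<n. f (Suc i) t - f i t) = f n t - f 0 t" for n t
      by (rule sum_lessThan_telescope)
    from uniform_limitD[OF u \<open>\<epsilon> > 0\<close>] show "\<forall>\<^sub>F n in sequentially. \<forall>t\<in>S. dist (f n t) (f 0 t + (\<Sum>i. f (Suc i) t - f i t)) < \<epsilon>"
      by eventually_elim (simp add: tel dist_real_def algebra_simps)
  qed
qed

definition "XL t = x0 + (\<Sum>i. X (Suc i) t - X i t)"
definition "YL t = y0 + (\<Sum>i. Y (Suc i) t - Y i t)"

lemma pic_ulim:
  shows "uniform_limit {-T<..<T} X XL sequentially" "uniform_limit {-T<..<T} Y YL sequentially"
proof -
  have b: "\<bar>X (Suc n) t - X n t\<bar> \<le> CC * KK ^ n * T ^ Suc n / fact (Suc n)"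
     "\<bar>Y (Suc n) t - Y n t\<bar> \<le> CC * KK ^ n * T ^ Suc n / fact (Suc n)" if "t \<in> {-T<..<T}" for n t
  proof -
    have CK: "CC * KK ^ n \<ge> 0" by (simp add: CC_def KK_def)
    have "\<bar>t\<bar> ^ Suc n \<le> T ^ Suc n" using that by (intro power_mono) auto
    then have "CC * KK ^ n * \<bar>t\<bar> ^ Suc n / fact (Suc n) \<le> CC * KK ^ n * T ^ Suc n / fact (Suc n)"
      using CK by (intro divide_right_mono mult_left_mono) auto
    then show "\<bar>X (Suc n) t - X n t\<bar> \<le> CC * KK ^ n * T ^ Suc n / fact (Suc n)"
     "\<bar>Y (Suc n) t - Y n t\<bar> \<le> CC * KK ^ n * T ^ Suc n / fact (Suc n)"
      using pic_bound[of n t] by linarith+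
  qed
  show "uniform_limit {-T<..<T} X XL sequentially"
    using tele_ulim[of "{-T<..<T}" X, OF b(1) summable_M] by (simp add: XL_def[abs_def] pic_0)
  show "uniform_limit {-T<..<T} Y YL sequentially"
    using tele_ulim[of "{-T<..<T}" Y, OF b(2) summable_M] by (simp add: YL_def[abs_def] pic_0)
qed

lemma XL_0: "XL 0 = x0" "YL 0 = y0"
  by (simp_all add: XL_def YL_def pic_0)

lemma XL_deriv: "(XL has_real_derivative e * (b * sin (YL t) + 1)) (at t)"
proof -
  define T where "T = \<bar>t\<bar> + 1"
  define S where "S = {-T<..<T}"
  have tS: "t \<in> S" "0 \<in> S" "open S" "convex S" by (auto simp: S_def T_def)
  have "\<exists>g. \<forall>x\<in>S. (\<lambda>n. X (Suc n) x) \<longlonglongrightarrow> g x \<and>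
          (g has_derivative (*) (e * (b * sin (YL x) + 1))) (at x within S)"
  proof (rule has_derivative_sequence[OF tS(4) _ _ tS(2)])
    show "(X (Suc n) has_derivative (*) (e * (b * sin (Y n x) + 1))) (at x within S)" for n x
      using pic_deriv(1)[of n x] by (simp add: has_field_derivative_def has_derivative_at_withinI)
    show "(\<lambda>n. X (Suc n) 0) \<longlonglongrightarrow> x0" by (simp add: pic_0)
    fix \<epsilon> :: real assume "\<epsilon> > 0"
    then have "\<epsilon> / (\<bar>e * b\<bar> + 1) > 0" by (simp add: add_pos_nonneg)
    from uniform_limitD[OF pic_ulim(2)[of T] this]
    show "\<forall>\<^sub>F n in sequentially. \<forall>x\<in>S. \<forall>h. norm (e * (b * sin (Y n x) + 1) * h - e * (b * sin (YL x) + 1) * h) \<le> \<epsilon> * norm h"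
    proof eventually_elim
      case (elim n)
      show ?case
      proof (intro ballI allI)
        fix x h assume "x \<in> S"
        then have d: "\<bar>Y n x - YL x\<bar> < \<epsilon> / (\<bar>e * b\<bar> + 1)" using bspec[OF elim, of x] by (auto simp: S_def dist_real_def)
        have "\<bar>e * (b * sin (Y n x) + 1) - e * (b * sin (YL x) + 1)\<bar> = \<bar>e * b\<bar> * \<bar>sin (Y n x) - sin (YL x)\<bar>"
          by (simp add: algebra_simps abs_mult[symmetric])
        also have "\<dots> \<le> \<bar>e * b\<bar> * \<bar>Y n x - YL x\<bar>"
          by (intro mult_left_mono abs_sin_diff) auto
        also have "\<dots> \<le> (\<bar>e * b\<bar> + 1) * (\<epsilon> / (\<bar>e * b\<bar> + 1))"
          using d by (intro mult_mono) auto
        also have "\<dots> = \<epsilon>" by (simp add: add_pos_nonneg)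
        finally have "\<bar>e * (b * sin (Y n x) + 1) - e * (b * sin (YL x) + 1)\<bar> \<le> \<epsilon>" .
        then have "\<bar>e * (b * sin (Y n x) + 1) - e * (b * sin (YL x) + 1)\<bar> * \<bar>h\<bar> \<le> \<epsilon> * \<bar>h\<bar>"
          by (intro mult_right_mono) auto
        then show "norm (e * (b * sin (Y n x) + 1) * h - e * (b * sin (YL x) + 1) * h) \<le> \<epsilon> * norm h"
          by (simp add: left_diff_distrib[symmetric] abs_mult)
      qed
    qed
  qed
  then obtain g where g: "\<And>x. x \<in> S \<Longrightarrow> (\<lambda>n. X (Suc n) x) \<longlonglongrightarrow> g x"
    "\<And>x. x \<in> S \<Longrightarrow> (g has_derivative (*) (e * (b * sin (YL x) + 1))) (at x within S)" by blast
  have gx: "g x = XL x" if "x \<in> S" for x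
  proof -
    have "(\<lambda>n. X n x) \<longlonglongrightarrow> XL x" using tendsto_uniform_limitI[OF pic_ulim(1)[of T]] that S_def by auto
    then have "(\<lambda>n. X (Suc n) x) \<longlonglongrightarrow> XL x" by (rule LIMSEQ_Suc)
    then show ?thesis using g(1)[OF that] LIMSEQ_unique by blast
  qed
  have "(g has_real_derivative e * (b * sin (YL t) + 1)) (at t)"
    using g(2)[OF tS(1)] at_within_open[OF tS(1,3)] by (simp add: has_field_derivative_def)
  then show ?thesis
    by (rule has_field_derivative_transform_within_open[OF _ tS(3,1)]) (use gx in auto)
qed

lemma YL_deriv: "(YL has_real_derivative XL t) (at t)"
proof -
  define T where "T = \<bar>t\<bar> + 1"
  define S where "S = {-T<..<T}"
  have tS: "t \<in> S" "0 \<in> S" "open S" "convex S" by (auto simp: S_def T_def)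
  have "\<exists>g. \<forall>x\<in>S. (\<lambda>n. Y (Suc n) x) \<longlonglongrightarrow> g x \<and>
          (g has_derivative (*) (XL x)) (at x within S)"
  proof (rule has_derivative_sequence[OF tS(4) _ _ tS(2)])
    show "(Y (Suc n) has_derivative (*) (X n x)) (at x within S)" for n x
      using pic_deriv(2)[of n x] by (simp add: has_field_derivative_def has_derivative_at_withinI)
    show "(\<lambda>n. Y (Suc n) 0) \<longlonglongrightarrow> y0" by (simp add: pic_0)
    fix \<epsilon> :: real assume "\<epsilon> > 0"
    from uniform_limitD[OF pic_ulim(1)[of T] this]
    show "\<forall>\<^sub>F n in sequentially. \<forall>x\<in>S. \<forall>h. norm (X n x * h - XL x * h) \<le> \<epsilon> * norm h"
    proof eventually_elim
      case (elim n)
      show ?case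
      proof (intro ballI allI)
        fix x h assume "x \<in> S"
        then have d: "\<bar>X n x - XL x\<bar> \<le> \<epsilon>" using bspec[OF elim, of x] by (auto simp: S_def dist_real_def)
        then have "\<bar>X n x - XL x\<bar> * \<bar>h\<bar> \<le> \<epsilon> * \<bar>h\<bar>"
          by (intro mult_right_mono) auto
        then show "norm (X n x * h - XL x * h) \<le> \<epsilon> * norm h"
          by (simp add: left_diff_distrib[symmetric] abs_mult)
      qed
    qed
  qed
  then obtain g where g: "\<And>x. x \<in> S \<Longrightarrow> (\<lambda>n. Y (Suc n) x) \<longlonglongrightarrow> g x"
    "\<And>x. x \<in> S \<Longrightarrow> (g has_derivative (*) (XL x)) (at x within S)" by blast
  have gx: "g x = YL x" if "x \<in> S" for x
  proof -
    have "(\<lambda>n. Y n x) \<longlonglongrightarrow> YL x" using tendsto_uniform_limitI[OF pic_ulim(2)[of T]] that S_def by auto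
    then have "(\<lambda>n. Y (Suc n) x) \<longlonglongrightarrow> YL x" by (rule LIMSEQ_Suc)
    then show ?thesis using g(1)[OF that] LIMSEQ_unique by blast
  qed
  have "(g has_real_derivative XL t) (at t)"
    using g(2)[OF tS(1)] at_within_open[OF tS(1,3)] by (simp add: has_field_derivative_def)
  then show ?thesis
    by (rule has_field_derivative_transform_within_open[OF _ tS(3,1)]) (use gx in auto)
qed

end

lemma ode_exists:
  fixes e b x0 y0 :: real
  shows "\<exists>x y. x 0 = x0 \<and> y 0 = y0 \<and>
    (\<forall>t. (x has_real_derivative e * (b * sin (y t) + 1)) (at t) \<and> (y has_real_derivative x t) (at t))"
  using XL_0 XL_deriv YL_deriv by blast

lemma pser_zero_left:
  fixes d :: "nat \<Rightarrow> real"
  assumes r: "r > 0" and dl: "\<delta> > 0"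
    and sm: "\<And>w. \<bar>w\<bar> < r \<Longrightarrow> (\<lambda>k. d k * w ^ k) sums g w"
    and z: "\<And>w. - \<delta> < w \<Longrightarrow> w < 0 \<Longrightarrow> g w = 0"
  shows "d n = 0"
proof (induction n rule: less_induct)
  case (less n)
  define h where "h w = g w / w ^ n" for w :: real
  have hs: "(\<lambda>k. d (k + n) * w ^ k) sums h w" if "w \<noteq> 0" "norm w < r" for w
  proof -
    have "(\<lambda>k. d (k + n) * w ^ (k + n)) sums (g w - (\<Sum>i<n. d i * w ^ i))"
      using sums_split_initial_segment[OF sm[of w], of n] that by simp
    moreover have "(\<Sum>i<n. d i * w ^ i) = 0" using less by simp
    ultimately have "(\<lambda>k. d (k + n) * w ^ (k + n)) sums g w" by simp
    then have "(\<lambda>k. d (k + n) * w ^ (k + n) / w ^ n) sums (g w / w ^ n)"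
      by (rule sums_divide)
    then show ?thesis using that by (simp add: h_def power_add)
  qed
  have "(h \<longlongrightarrow> d (0 + n)) (at 0)"
    by (rule powser_limit_0_strong[OF r]) (use hs in auto)
  then have hl: "(h \<longlongrightarrow> d n) (at_left 0)"
    by (simp add: filterlim_at_split)
  moreover have ev: "eventually (\<lambda>w. h w = 0) (at_left (0::real))"
  proof -
    have "eventually (\<lambda>w. w \<in> {-\<delta><..<0}) (at_left (0::real))"
      using eventually_at_left_real[of "-\<delta>" 0] dl by simp
    then show ?thesis by eventually_elim (simp add: h_def z)
  qed
  have "((\<lambda>_. 0) \<longlongrightarrow> d n) (at_left (0::real))"
    using Lim_transform_eventually[OF hl ev] .
  from tendsto_unique[OF trivial_limit_at_left_real tendsto_const this]
  show "d n = 0" by simp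
qed

definition pser :: "(real \<Rightarrow> real) \<Rightarrow> (nat \<Rightarrow> real) \<Rightarrow> bool" where
  "pser g d \<longleftrightarrow> (\<exists>r>0. \<forall>w. \<bar>w\<bar> < r \<longrightarrow> (\<lambda>k. d k * w ^ k) sums g w)"

lemma pser_unique:
  assumes "pser g d1" "pser g d2"
  shows "d1 = d2"
proof
  fix n
  obtain r1 where r1: "r1 > 0" "\<And>w. \<bar>w\<bar> < r1 \<Longrightarrow> (\<lambda>k. d1 k * w ^ k) sums g w"
    using assms(1) unfolding pser_def by blast
  obtain r2 where r2: "r2 > 0" "\<And>w. \<bar>w\<bar> < r2 \<Longrightarrow> (\<lambda>k. d2 k * w ^ k) sums g w"
    using assms(2) unfolding pser_def by blast
  have "(\<lambda>k. d1 k - d2 k) n = 0"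
  proof (rule pser_zero_left[of "min r1 r2" "min r1 r2" _ "\<lambda>_. 0"])
    show "(\<lambda>k. (d1 k - d2 k) * w ^ k) sums 0" if "\<bar>w\<bar> < min r1 r2" for w
      using sums_diff[OF r1(2)[of w] r2(2)[of w]] that by (simp add: algebra_simps)
  qed (use r1 r2 in auto)
  then show "d1 n = d2 n" by simp
qed

lemma pser_deriv0:
  fixes d :: "nat \<Rightarrow> real"
  assumes r: "r > 0" and sm: "\<And>w. \<bar>w\<bar> < r \<Longrightarrow> (\<lambda>k. d k * w ^ k) sums g w"
  shows "(g has_real_derivative d 1) (at 0)"
proof -
  have g0: "g 0 = d 0"
    using sums_unique2[OF sm[of 0] powser_sums_zero] r by simp
  have hs: "(\<lambda>k. d (Suc k) * w ^ k) sums ((g w - d 0) / w)" if "w \<noteq> 0" "norm w < r" for w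
  proof -
    have "(\<lambda>k. d (Suc k) * w ^ Suc k) sums (g w - d 0)"
      using sm[of w] that by (subst sums_Suc_iff) simp
    then have "(\<lambda>k. d (Suc k) * w ^ Suc k / w) sums ((g w - d 0) / w)"
      by (rule sums_divide)
    then show ?thesis using that by simp
  qed
  have "((\<lambda>w. (g w - d 0) / w) \<longlongrightarrow> d (Suc 0)) (at 0)"
    by (rule powser_limit_0_strong[OF r]) (use hs in auto)
  then show ?thesis
    unfolding has_field_derivative_iff by (simp add: g0)
qed

lemma sum_restrict:
  fixes f :: "'a \<Rightarrow> real" and g :: "'b \<Rightarrow> 'a"
  assumes "(f has_sum S) UNIV" "inj g" "\<And>x. x \<notin> range g \<Longrightarrow> f x = 0"
  shows "((\<lambda>y. f (g y)) has_sum S) UNIV"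
proof -
  have "(f has_sum S) (range g)"
    using has_sum_cong_neutral[of UNIV "range g" f f S] assms(1,3) by auto
  then show ?thesis
    using has_sum_reindex[of g UNIV f S] assms(2) by (simp add: o_def)
qed

lemma summ_restrict:
  fixes f :: "'a \<Rightarrow> real" and g :: "'b \<Rightarrow> 'a"
  assumes "f summable_on UNIV" "inj g"
  shows "(\<lambda>y. f (g y)) summable_on UNIV"
proof -
  have "f summable_on (range g)" using summable_on_subset_banach[OF assms(1)] by auto
  then show ?thesis using summable_on_reindex[of g UNIV f] assms(2) by (simp add: o_def)
qed

lemma local_data:
  fixes F :: "real \<Rightarrow> real \<Rightarrow> real \<Rightarrow> real"
  assumes an: "real_analytic3_on F U" and p: "(I0, \<theta>0, e) \<in> U"
  obtains \<rho> a where "\<rho> > 0"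
    "\<And>u v w. \<bar>u\<bar> \<le> \<rho> \<Longrightarrow> \<bar>v\<bar> \<le> \<rho> \<Longrightarrow> \<bar>w\<bar> \<le> \<rho> \<Longrightarrow>
       ((\<lambda>(i,j,k). a (i,j,k) * u ^ i * v ^ j * w ^ k) has_sum F (I0 + u) (\<theta>0 + v) (e + w)) UNIV"
    "\<And>u v w. \<bar>u\<bar> \<le> \<rho> \<Longrightarrow> \<bar>v\<bar> \<le> \<rho> \<Longrightarrow> \<bar>w\<bar> \<le> \<rho> \<Longrightarrow> (I0 + u, \<theta>0 + v, e + w) \<in> U"
    "(\<lambda>(i,j,k). \<bar>a (i,j,k)\<bar> * \<rho> ^ i * \<rho> ^ j * \<rho> ^ k) summable_on UNIV"
proof -
  obtain r a where r: "r > 0" "ball (I0, \<theta>0, e) r \<subseteq> U"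
    and hs: "\<And>x. x \<in> ball (I0, \<theta>0, e) r \<Longrightarrow>
       ((\<lambda>(i,j,k). a (i,j,k) * (fst x - I0) ^ i * (fst (snd x) - \<theta>0) ^ j * (snd (snd x) - e) ^ k)
         has_sum F (fst x) (fst (snd x)) (snd (snd x))) UNIV"
    using an p unfolding real_analytic3_on_def by fastforce
  define \<rho> where "\<rho> = r / 2"
  have \<rho>: "\<rho> > 0" using r by (simp add: \<rho>_def)
  have inb: "(I0 + u, \<theta>0 + v, e + w) \<in> ball (I0, \<theta>0, e) r" if "\<bar>u\<bar> \<le> \<rho>" "\<bar>v\<bar> \<le> \<rho>" "\<bar>w\<bar> \<le> \<rho>" for u v w
  proof -
    have "u\<^sup>2 \<le> \<rho>\<^sup>2" "v\<^sup>2 \<le> \<rho>\<^sup>2" "w\<^sup>2 \<le> \<rho>\<^sup>2"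
      using power_mono[OF that(1), of 2] power_mono[OF that(2), of 2] power_mono[OF that(3), of 2] by simp_all
    moreover have "r * r > 0" using r(1) by simp
    ultimately have "u\<^sup>2 + (v\<^sup>2 + w\<^sup>2) < r\<^sup>2" by (simp add: \<rho>_def power2_eq_square)
    then have "sqrt (u\<^sup>2 + (v\<^sup>2 + w\<^sup>2)) < r"
      using r(1) real_sqrt_less_iff[of _ "r\<^sup>2"] by simp
    then show ?thesis by (simp add: dist_Pair_Pair dist_real_def)
  qed
  show ?thesis
  proof
    show "\<rho> > 0" by (fact \<rho>)
    fix u v w :: real assume uvw: "\<bar>u\<bar> \<le> \<rho>" "\<bar>v\<bar> \<le> \<rho>" "\<bar>w\<bar> \<le> \<rho>"
    show "((\<lambda>(i,j,k). a (i,j,k) * u ^ i * v ^ j * w ^ k) has_sum F (I0 + u) (\<theta>0 + v) (e + w)) UNIV"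
      using hs[OF inb[OF uvw]] by simp
    show "(I0 + u, \<theta>0 + v, e + w) \<in> U" using inb[OF uvw] r(2) by auto
  next
    have "(\<lambda>(i,j,k). a (i,j,k) * \<rho> ^ i * \<rho> ^ j * \<rho> ^ k) summable_on UNIV"
      using hs[OF inb[of \<rho> \<rho> \<rho>]] \<rho> unfolding summable_on_def by fastforce
    then have "(\<lambda>x. norm ((\<lambda>(i,j,k). a (i,j,k) * \<rho> ^ i * \<rho> ^ j * \<rho> ^ k) x)) summable_on UNIV"
      using summable_on_iff_abs_summable_on_real by blast
    moreover have "norm ((\<lambda>(i,j,k). a (i,j,k) * \<rho> ^ i * \<rho> ^ j * \<rho> ^ k) x) = (\<lambda>(i,j,k). \<bar>a (i,j,k)\<bar> * \<rho> ^ i * \<rho> ^ j * \<rho> ^ k) x" for x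
      using \<rho> by (auto simp: abs_mult split: prod.splits)
    ultimately show "(\<lambda>(i,j,k). \<bar>a (i,j,k)\<bar> * \<rho> ^ i * \<rho> ^ j * \<rho> ^ k) summable_on UNIV" by simp
  qed
qed


lemma regroup:
  fixes f :: "nat \<Rightarrow> nat \<Rightarrow> real"
  assumes "((\<lambda>(k,j). f k j * w ^ k) has_sum S) UNIV" "\<And>k. f k summable_on UNIV"
  shows "(\<lambda>k. infsum (f k) UNIV * w ^ k) sums S"
proof -
  have "((\<lambda>k. infsum (f k) UNIV * w ^ k) has_sum S) UNIV"
  proof (rule has_sum_Sigma'[where B="\<lambda>_. UNIV"])
    show "((\<lambda>(k,j). f k j * w ^ k) has_sum S) (Sigma UNIV (\<lambda>_. UNIV))" using assms(1) by simp
    show "((\<lambda>j. (\<lambda>(k,j). f k j * w ^ k) (k, j)) has_sum infsum (f k) UNIV * w ^ k) UNIV" for k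
      using has_sum_cmult_left[OF has_sum_infsum[OF assms(2)[of k]], of "w ^ k"] by simp
  qed
  then show ?thesis by (rule has_sum_imp_sums)
qed

context
  fixes a :: "nat \<times> nat \<times> nat \<Rightarrow> real" and \<rho> :: real
  assumes \<rho>: "\<rho> > 0"
    and maj: "(\<lambda>(i,j,k). \<bar>a (i,j,k)\<bar> * \<rho> ^ i * \<rho> ^ j * \<rho> ^ k) summable_on UNIV"
begin

lemma T_summable:
  assumes "\<bar>u\<bar> \<le> \<rho>" "\<bar>v\<bar> \<le> \<rho>" "\<bar>w\<bar> \<le> \<rho>"
  shows "(\<lambda>(i,j,k). a (i,j,k) * u ^ i * v ^ j * w ^ k) summable_on B"
proof -
  have "(\<lambda>(i,j,k). \<bar>a (i,j,k)\<bar> * \<rho> ^ i * \<rho> ^ j * \<rho> ^ k) summable_on B"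
    using summable_on_subset_banach[OF maj] by auto
  then have m: "(\<lambda>x. norm ((\<lambda>(i,j,k). \<bar>a (i,j,k)\<bar> * \<rho> ^ i * \<rho> ^ j * \<rho> ^ k) x)) summable_on B"
    using summable_on_iff_abs_summable_on_real by blast
  have "(\<lambda>x. norm ((\<lambda>(i,j,k). a (i,j,k) * u ^ i * v ^ j * w ^ k) x)) summable_on B"
  proof (rule Infinite_Sum.abs_summable_on_comparison_test[OF m])
    fix x assume "x \<in> B"
    obtain i j k where x: "x = (i,j,k)" by (cases x) auto
    have "\<bar>u\<bar> ^ i \<le> \<rho> ^ i" "\<bar>v\<bar> ^ j \<le> \<rho> ^ j" "\<bar>w\<bar> ^ k \<le> \<rho> ^ k"
      using assms by (auto intro: power_mono)
    then have "\<bar>a (i,j,k)\<bar> * \<bar>u\<bar> ^ i * \<bar>v\<bar> ^ j * \<bar>w\<bar> ^ k \<le> \<bar>a (i,j,k)\<bar> * \<rho> ^ i * \<rho> ^ j * \<rho> ^ k"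
      using \<rho> by (intro mult_mono) auto
    then show "norm ((\<lambda>(i,j,k). a (i,j,k) * u ^ i * v ^ j * w ^ k) x) \<le> norm ((\<lambda>(i,j,k). \<bar>a (i,j,k)\<bar> * \<rho> ^ i * \<rho> ^ j * \<rho> ^ k) x)"
      using \<rho> by (simp add: x abs_mult power_abs)
  qed
  then show ?thesis using summable_on_iff_abs_summable_on_real by blast
qed

lemma coefk_summable:
  assumes "\<bar>w\<bar> \<le> \<rho>"
  shows "(\<lambda>k. a (i0, j0, k) * w ^ k) summable_on UNIV"
proof -
  have "(\<lambda>k. (\<lambda>(i,j,k). a (i,j,k) * \<rho> ^ i * \<rho> ^ j * w ^ k) (i0, j0, k)) summable_on UNIV"
    by (rule summ_restrict[OF T_summable]) (use assms \<rho> in \<open>auto simp: inj_def\<close>)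
  then have "(\<lambda>k. a (i0, j0, k) * w ^ k * (\<rho> ^ i0 * \<rho> ^ j0)) summable_on UNIV"
    by (simp add: algebra_simps)
  then show ?thesis using summable_on_cmult_left'[of "\<rho> ^ i0 * \<rho> ^ j0" "\<lambda>k. a (i0, j0, k) * w ^ k" UNIV] \<rho> by simp
qed

lemma coefj_summable:
  assumes "\<bar>v\<bar> \<le> \<rho>"
  shows "(\<lambda>j. a (0, j, k) * v ^ j) summable_on UNIV"
proof -
  have "(\<lambda>j. (\<lambda>(i,j,k). a (i,j,k) * \<rho> ^ i * v ^ j * \<rho> ^ k) (0, j, k)) summable_on UNIV"
    by (rule summ_restrict[OF T_summable]) (use assms \<rho> in \<open>auto simp: inj_def\<close>)
  then have "(\<lambda>j. a (0, j, k) * v ^ j * \<rho> ^ k) summable_on UNIV"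
    by (simp add: algebra_simps)
  then show ?thesis using summable_on_cmult_left'[of "\<rho> ^ k" "\<lambda>j. a (0, j, k) * v ^ j" UNIV] \<rho> by simp
qed

lemma coefi_summable:
  assumes "\<bar>u\<bar> \<le> \<rho>"
  shows "(\<lambda>i. a (i, 0, k) * u ^ i) summable_on UNIV"
proof -
  have "(\<lambda>i. (\<lambda>(i,j,k). a (i,j,k) * u ^ i * \<rho> ^ j * \<rho> ^ k) (i, 0, k)) summable_on UNIV"
    by (rule summ_restrict[OF T_summable]) (use assms \<rho> in \<open>auto simp: inj_def\<close>)
  then have "(\<lambda>i. a (i, 0, k) * u ^ i * \<rho> ^ k) summable_on UNIV"
    by (simp add: algebra_simps)
  then show ?thesis using summable_on_cmult_left'[of "\<rho> ^ k" "\<lambda>i. a (i, 0, k) * u ^ i" UNIV] \<rho> by simp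
qed

context
  fixes F :: "real \<Rightarrow> real \<Rightarrow> real \<Rightarrow> real" and I0 \<theta>0 e :: real
  assumes hs: "\<And>u v w. \<bar>u\<bar> \<le> \<rho> \<Longrightarrow> \<bar>v\<bar> \<le> \<rho> \<Longrightarrow> \<bar>w\<bar> \<le> \<rho> \<Longrightarrow>
       ((\<lambda>(i,j,k). a (i,j,k) * u ^ i * v ^ j * w ^ k) has_sum F (I0 + u) (\<theta>0 + v) (e + w)) UNIV"
begin

lemma slice00:
  assumes "\<bar>w\<bar> \<le> \<rho>"
  shows "(\<lambda>k. a (0,0,k) * w ^ k) sums F I0 \<theta>0 (e + w)"
proof -
  have "((\<lambda>k. (\<lambda>(i,j,k). a (i,j,k) * 0 ^ i * 0 ^ j * w ^ k) (0,0,k)) has_sum F (I0 + 0) (\<theta>0 + 0) (e + w)) UNIV"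
    by (rule sum_restrict[OF hs]) (use assms \<rho> in \<open>auto simp: inj_def image_def\<close>)
  then show ?thesis by (intro has_sum_imp_sums) simp
qed

lemma sliceJ:
  assumes "\<bar>v\<bar> \<le> \<rho>" "\<bar>w\<bar> \<le> \<rho>"
  shows "(\<lambda>k. infsum (\<lambda>j. a (0,j,k) * v ^ j) UNIV * w ^ k) sums F I0 (\<theta>0 + v) (e + w)"
proof (rule regroup)
  have "((\<lambda>y. (\<lambda>(i,j,k). a (i,j,k) * 0 ^ i * v ^ j * w ^ k) ((\<lambda>(k,j). (0,j,k)) y)) has_sum F (I0 + 0) (\<theta>0 + v) (e + w)) UNIV"
    by (rule sum_restrict[OF hs]) (use assms \<rho> in \<open>auto simp: inj_def image_def\<close>)
  then show "((\<lambda>(k,j). a (0,j,k) * v ^ j * w ^ k) has_sum F I0 (\<theta>0 + v) (e + w)) UNIV"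
    by (simp add: case_prod_unfold)
  show "(\<lambda>j. a (0,j,k) * v ^ j) summable_on UNIV" for k by (rule coefj_summable[OF assms(1)])
qed

lemma sliceI:
  assumes "\<bar>u\<bar> \<le> \<rho>" "\<bar>w\<bar> \<le> \<rho>"
  shows "(\<lambda>k. infsum (\<lambda>i. a (i,0,k) * u ^ i) UNIV * w ^ k) sums F (I0 + u) \<theta>0 (e + w)"
proof (rule regroup)
  have "((\<lambda>y. (\<lambda>(i,j,k). a (i,j,k) * u ^ i * 0 ^ j * w ^ k) ((\<lambda>(k,i). (i,0,k)) y)) has_sum F (I0 + u) (\<theta>0 + 0) (e + w)) UNIV"
    by (rule sum_restrict[OF hs]) (use assms \<rho> in \<open>auto simp: inj_def image_def\<close>)
  then show "((\<lambda>(k,i). a (i,0,k) * u ^ i * w ^ k) has_sum F (I0 + u) \<theta>0 (e + w)) UNIV"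
    by (simp add: case_prod_unfold)
  show "(\<lambda>i. a (i,0,k) * u ^ i) summable_on UNIV" for k by (rule coefi_summable[OF assms(1)])
qed

lemma remainder:
  assumes w: "\<bar>w\<bar> \<le> \<rho>" and s: "0 \<le> s" "s \<le> \<rho>" and uv: "\<bar>u\<bar> \<le> s" "\<bar>v\<bar> \<le> s"
  shows "\<bar>F (I0 + u) (\<theta>0 + v) (e + w) - F I0 \<theta>0 (e + w)
           - u * infsum (\<lambda>k. a (1,0,k) * w ^ k) UNIV - v * infsum (\<lambda>k. a (0,1,k) * w ^ k) UNIV\<bar>
         \<le> (s / \<rho>) ^ 2 * infsum (\<lambda>(i,j,k). \<bar>a (i,j,k)\<bar> * \<rho> ^ i * \<rho> ^ j * \<rho> ^ k) UNIV"
proof -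
  define f where "f = (\<lambda>(i,j,k). a (i,j,k) * u ^ i * v ^ j * w ^ k)"
  define M where "M = (\<lambda>(i,j,k). \<bar>a (i,j,k)\<bar> * \<rho> ^ i * \<rho> ^ j * \<rho> ^ k)"
  define Q where "Q = infsum (\<lambda>k. a (1,0,k) * w ^ k) UNIV"
  define P where "P = infsum (\<lambda>k. a (0,1,k) * w ^ k) UNIV"
  define F0 where "F0 = infsum (\<lambda>k. a (0,0,k) * w ^ k) UNIV"
  define R0 where "R0 = range (\<lambda>k::nat. (0::nat,0::nat,k))"
  define R1 where "R1 = range (\<lambda>k::nat. (1::nat,0::nat,k))"
  define R2 where "R2 = range (\<lambda>k::nat. (0::nat,1::nat,k))"
  define Rest where "Rest = UNIV - (R0 \<union> R1 \<union> R2)"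
  define R where "R = infsum f Rest"
  have u: "\<bar>u\<bar> \<le> \<rho>" and v: "\<bar>v\<bar> \<le> \<rho>" using uv s by auto
  have all: "(f has_sum F (I0 + u) (\<theta>0 + v) (e + w)) UNIV" using hs[OF u v w] by (simp add: f_def)
  have F0: "F I0 \<theta>0 (e + w) = F0"
  proof -
    have "(\<lambda>k. a (0,0,k) * w ^ k) sums F0"
      unfolding F0_def by (rule has_sum_imp_sums, rule has_sum_infsum, rule coefk_summable[OF w])
    then show ?thesis using slice00[OF w] sums_unique2 by blast
  qed
  have h0: "(f has_sum F0) R0"
  proof -
    have "((f \<circ> (\<lambda>k. (0,0,k))) has_sum F0) UNIV"
      using has_sum_infsum[OF coefk_summable[OF w, of 0 0]] by (simp add: f_def o_def F0_def)
    then show ?thesis unfolding R0_def by (subst has_sum_reindex) (auto simp: inj_def)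
  qed
  have h1: "(f has_sum u * Q) R1"
  proof -
    have "((f \<circ> (\<lambda>k. (1,0,k))) has_sum u * Q) UNIV"
      using has_sum_cmult_right[OF has_sum_infsum[OF coefk_summable[OF w, of 1 0]], of u]
      by (simp add: f_def o_def Q_def algebra_simps)
    then show ?thesis unfolding R1_def by (subst has_sum_reindex) (auto simp: inj_def)
  qed
  have h2: "(f has_sum v * P) R2"
  proof -
    have "((f \<circ> (\<lambda>k. (0,1,k))) has_sum v * P) UNIV"
      using has_sum_cmult_right[OF has_sum_infsum[OF coefk_summable[OF w, of 0 1]], of v]
      by (simp add: f_def o_def P_def algebra_simps)
    then show ?thesis unfolding R2_def by (subst has_sum_reindex) (auto simp: inj_def)
  qed
  have fs: "f summable_on B" for B unfolding f_def by (rule T_summable[OF u v w])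
  have h3: "(f has_sum R) Rest" unfolding R_def using fs by simp
  have "(f has_sum F0 + u * Q + v * P + R) (R0 \<union> R1 \<union> R2 \<union> Rest)"
    by (intro has_sum_Un_disjoint h0 h1 h2 h3) (auto simp: R0_def R1_def R2_def Rest_def)
  moreover have "R0 \<union> R1 \<union> R2 \<union> Rest = UNIV" by (auto simp: Rest_def)
  ultimately have eq: "F (I0 + u) (\<theta>0 + v) (e + w) = F0 + u * Q + v * P + R"
    using has_sum_unique[OF all] by simp
  have Ms: "M summable_on B" for B using summable_on_subset_banach[OF maj] by (auto simp: M_def)
  have M0: "M x \<ge> 0" for x using \<rho> by (auto simp: M_def split: prod.splits)
  have pt: "norm (f x) \<le> (s / \<rho>) ^ 2 * M x" if "x \<in> Rest" for x
  proof -
    obtain i j k where x: "x = (i,j,k)" by (cases x) auto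
    have ij: "2 \<le> i + j" using that unfolding x Rest_def R0_def R1_def R2_def
      by (cases i; cases j) auto
    have "\<bar>u\<bar> ^ i * \<bar>v\<bar> ^ j \<le> s ^ i * s ^ j"
      using uv by (intro mult_mono power_mono) auto
    also have "\<dots> = (s / \<rho>) ^ (i + j) * \<rho> ^ (i + j)"
      using \<rho> by (simp add: power_add power_divide)
    also have "\<dots> \<le> (s / \<rho>) ^ 2 * \<rho> ^ (i + j)"
      using s \<rho> ij by (intro mult_right_mono power_decreasing) auto
    finally have b: "\<bar>u\<bar> ^ i * \<bar>v\<bar> ^ j \<le> (s / \<rho>) ^ 2 * (\<rho> ^ i * \<rho> ^ j)" by (simp add: power_add)
    have "\<bar>w\<bar> ^ k \<le> \<rho> ^ k" using w by (intro power_mono) auto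
    have "norm (f x) = \<bar>a (i,j,k)\<bar> * (\<bar>u\<bar> ^ i * \<bar>v\<bar> ^ j) * \<bar>w\<bar> ^ k"
      by (simp add: x f_def abs_mult power_abs)
    also have "\<dots> \<le> \<bar>a (i,j,k)\<bar> * ((s / \<rho>) ^ 2 * (\<rho> ^ i * \<rho> ^ j)) * \<rho> ^ k"
    proof (rule mult_mono[OF mult_left_mono[OF b] \<open>\<bar>w\<bar> ^ k \<le> \<rho> ^ k\<close>])
      show "0 \<le> \<bar>a (i, j, k)\<bar> * ((s / \<rho>)\<^sup>2 * (\<rho> ^ i * \<rho> ^ j))" using \<rho> by simp
    qed auto
    also have "\<dots> = (s / \<rho>) ^ 2 * M x" by (simp add: x M_def)
    finally show ?thesis .
  qed
  have nfs: "(\<lambda>x. norm (f x)) summable_on Rest"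
    using fs summable_on_iff_abs_summable_on_real by blast
  have "\<bar>R\<bar> \<le> infsum (\<lambda>x. norm (f x)) Rest"
    unfolding R_def using norm_infsum_bound[OF nfs] by simp
  also have "\<dots> \<le> infsum (\<lambda>x. (s / \<rho>) ^ 2 * M x) Rest"
    by (rule infsum_mono[OF nfs summable_on_cmult_right[OF Ms] pt])
  also have "\<dots> = (s / \<rho>) ^ 2 * infsum M Rest"
    by (rule infsum_cmult_right') 
  also have "\<dots> \<le> (s / \<rho>) ^ 2 * infsum M UNIV"
    by (intro mult_left_mono infsum_mono_neutral Ms M0) auto
  finally have "\<bar>R\<bar> \<le> (s / \<rho>) ^ 2 * infsum M UNIV" .
  then show ?thesis using eq F0 by (simp add: M_def Q_def P_def)
qed

lemma frechet:
  assumes w: "\<bar>w\<bar> \<le> \<rho>"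
  shows "((\<lambda>z. F (I0 + fst z) (\<theta>0 + snd z) (e + w)) has_derivative
          (\<lambda>z. fst z * infsum (\<lambda>k. a (1,0,k) * w ^ k) UNIV + snd z * infsum (\<lambda>k. a (0,1,k) * w ^ k) UNIV)) (at 0)"
proof -
  define A where "A = infsum (\<lambda>(i,j,k). \<bar>a (i,j,k)\<bar> * \<rho> ^ i * \<rho> ^ j * \<rho> ^ k) UNIV"
  have A0: "A \<ge> 0" unfolding A_def by (rule infsum_nonneg) (use \<rho> in \<open>auto split: prod.splits\<close>)
  show ?thesis
    unfolding has_derivative_at_alt
  proof (intro conjI allI impI)
    show "bounded_linear (\<lambda>z::real\<times>real. fst z * infsum (\<lambda>k. a (1,0,k) * w ^ k) UNIV + snd z * infsum (\<lambda>k. a (0,1,k) * w ^ k) UNIV)"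
      by (intro bounded_linear_add bounded_linear_mult_const bounded_linear_fst bounded_linear_snd bounded_linear_ident)
    fix \<epsilon> :: real assume \<epsilon>: "\<epsilon> > 0"
    define d where "d = min \<rho> (\<epsilon> * \<rho>\<^sup>2 / (A + 1))"
    have d: "d > 0" using \<rho> \<epsilon> A0 by (simp add: d_def)
    show "\<exists>d>0. \<forall>y. norm (y - 0) < d \<longrightarrow>
      norm (F (I0 + fst y) (\<theta>0 + snd y) (e + w) - F (I0 + fst 0) (\<theta>0 + snd 0) (e + w) -
        (fst (y - 0) * infsum (\<lambda>k. a (1,0,k) * w ^ k) UNIV + snd (y - 0) * infsum (\<lambda>k. a (0,1,k) * w ^ k) UNIV))
      \<le> \<epsilon> * norm (y - 0)"
    proof (intro exI[of _ d] conjI allI impI d)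
      fix y :: "real \<times> real" assume y: "norm (y - 0) < d"
      define s where "s = norm y"
      have fy: "\<bar>fst y\<bar> \<le> norm y" using norm_fst_le[of "fst y" "snd y"] by simp
      have sy: "\<bar>snd y\<bar> \<le> norm y" using norm_snd_le[of "snd y" "fst y"] by simp
      have s: "0 \<le> s" "s \<le> \<rho>" "\<bar>fst y\<bar> \<le> s" "\<bar>snd y\<bar> \<le> s"
        using y fy sy by (auto simp: s_def d_def)
      have r: "\<bar>F (I0 + fst y) (\<theta>0 + snd y) (e + w) - F I0 \<theta>0 (e + w)
           - fst y * infsum (\<lambda>k. a (1,0,k) * w ^ k) UNIV - snd y * infsum (\<lambda>k. a (0,1,k) * w ^ k) UNIV\<bar>
         \<le> (s / \<rho>) ^ 2 * A"
        unfolding A_def by (rule remainder[OF w s])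
      have "s < \<epsilon> * \<rho>\<^sup>2 / (A + 1)" using y by (simp add: s_def d_def)
      then have "s * (A + 1) < \<epsilon> * \<rho>\<^sup>2" using A0 by (simp add: field_simps)
      then have "s * A \<le> \<epsilon> * \<rho>\<^sup>2" using s(1) by (simp add: algebra_simps)
      then have "s * (s * A) \<le> s * (\<epsilon> * \<rho>\<^sup>2)" using s(1) by (rule mult_left_mono)
      then have "(s / \<rho>) ^ 2 * A \<le> \<epsilon> * s"
        using \<rho> s(1) by (simp add: power2_eq_square field_simps)
      then show "norm (F (I0 + fst y) (\<theta>0 + snd y) (e + w) - F (I0 + fst 0) (\<theta>0 + snd 0) (e + w) -
        (fst (y - 0) * infsum (\<lambda>k. a (1,0,k) * w ^ k) UNIV + snd (y - 0) * infsum (\<lambda>k. a (0,1,k) * w ^ k) UNIV))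
        \<le> \<epsilon> * norm (y - 0)"
        using r by (simp add: s_def algebra_simps)
    qed
  qed
qed

lemma pde_point:
  assumes w: "\<bar>w\<bar> \<le> \<rho>" and fi: "first_integral \<beta> (e + w) (\<lambda>I \<theta>. F I \<theta> (e + w))"
  shows "I0 * infsum (\<lambda>k. a (0,1,k) * w ^ k) UNIV
         + (e + w) * (\<beta> * sin \<theta>0 + 1) * infsum (\<lambda>k. a (1,0,k) * w ^ k) UNIV = 0"
proof -
  define Q where "Q = infsum (\<lambda>k. a (1,0,k) * w ^ k) UNIV"
  define P where "P = infsum (\<lambda>k. a (0,1,k) * w ^ k) UNIV"
  obtain x y where xy0: "x 0 = I0" "y 0 = \<theta>0"
    and ode: "\<And>t. (x has_real_derivative (e + w) * (\<beta> * sin (y t) + 1)) (at t) \<and> (y has_real_derivative x t) (at t)"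
    using ode_exists[of I0 \<theta>0 "e + w" \<beta>] by blast
  have const: "F (x t) (y t) (e + w) = F I0 \<theta>0 (e + w)" for t
    using fi ode xy0 unfolding first_integral_def by metis
  define D1 where "D1 = (e + w) * (\<beta> * sin \<theta>0 + 1)"
  have dx: "((\<lambda>t. x t - I0) has_derivative (\<lambda>h. D1 * h)) (at 0)"
    using ode[of 0] xy0 unfolding D1_def
    by (auto simp: has_field_derivative_def intro!: derivative_eq_intros)
  have dy: "((\<lambda>t. y t - \<theta>0) has_derivative (\<lambda>h. I0 * h)) (at 0)"
    using ode[of 0] xy0 by (auto simp: has_field_derivative_def intro!: derivative_eq_intros)
  have dg: "((\<lambda>t. (x t - I0, y t - \<theta>0)) has_derivative (\<lambda>h. (D1 * h, I0 * h))) (at 0)"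
    by (rule has_derivative_Pair[OF dx dy])
  have fr: "((\<lambda>z. F (I0 + fst z) (\<theta>0 + snd z) (e + w)) has_derivative (\<lambda>z. fst z * Q + snd z * P))
      (at ((\<lambda>t. (x t - I0, y t - \<theta>0)) 0))"
    using frechet[OF w] xy0 by (simp add: Q_def P_def zero_prod_def)
  have "((\<lambda>t. F (I0 + fst (x t - I0, y t - \<theta>0)) (\<theta>0 + snd (x t - I0, y t - \<theta>0)) (e + w)) has_derivative
      (\<lambda>h. fst (D1 * h, I0 * h) * Q + snd (D1 * h, I0 * h) * P)) (at 0)"
    by (rule has_derivative_compose[OF dg fr])
  then have "((\<lambda>t. F I0 \<theta>0 (e + w)) has_derivative (\<lambda>h. D1 * h * Q + I0 * h * P)) (at 0)"
    by (simp add: const)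
  from has_derivative_unique[OF this has_derivative_const]
  have "(\<lambda>h. D1 * h * Q + I0 * h * P) = (\<lambda>h. 0)" .
  then have "D1 * 1 * Q + I0 * 1 * P = 0" by metis
  then show ?thesis by (simp add: D1_def Q_def P_def algebra_simps)
qed

end

end

lemma propagate:
  fixes D :: "real \<Rightarrow> real"
  assumes lps: "\<And>e. 0 \<le> e \<Longrightarrow> e \<le> t \<Longrightarrow> \<exists>r>0. \<exists>d. \<forall>w. \<bar>w\<bar> < r \<longrightarrow> (\<lambda>k. d k * w ^ k) sums D (e + w)"
    and \<delta>: "\<delta> > 0" and z: "\<And>w. \<bar>w\<bar> < \<delta> \<Longrightarrow> D w = 0" and t: "0 \<le> t"
  shows "D t = 0"
proof -
  define A where "A = {\<tau>. 0 \<le> \<tau> \<and> \<tau> \<le> t \<and> (\<forall>u. 0 \<le> u \<and> u \<le> \<tau> \<longrightarrow> D u = 0)}"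
  have A0: "0 \<in> A" using t z \<delta> by (auto simp: A_def)
  have bdd: "bdd_above A" by (auto simp: A_def bdd_above_def)
  define s where "s = Sup A"
  have s0: "0 \<le> s" unfolding s_def using cSup_upper[OF A0 bdd] .
  have st: "s \<le> t" unfolding s_def by (rule cSup_least) (use A0 in \<open>auto simp: A_def\<close>)
  have below: "D u = 0" if "0 \<le> u" "u < s" for u
  proof -
    have ne: "A \<noteq> {}" using A0 by auto
    have "\<exists>\<tau>\<in>A. u < \<tau>" using less_cSup_iff[OF ne bdd, of u] that unfolding s_def by blast
    then obtain \<tau> where "\<tau> \<in> A" "u < \<tau>" by blast
    then show ?thesis using that by (auto simp: A_def)
  qed
  obtain r d where r: "r > 0" and sm: "\<And>w. \<bar>w\<bar> < r \<Longrightarrow> (\<lambda>k. d k * w ^ k) sums D (s + w)"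
    using lps[OF s0 st] by blast
  have dz: "d n = 0" for n
  proof (cases "s = 0")
    case True
    show ?thesis
      by (rule pser_zero_left[OF r \<delta> sm]) (use True z in auto)
  next
    case False
    then have "s > 0" using s0 by simp
    show ?thesis
      by (rule pser_zero_left[of r "min r s" d "\<lambda>w. D (s + w)"]) (use r \<open>s > 0\<close> sm below in auto)
  qed
  have near: "D (s + w) = 0" if "\<bar>w\<bar> < r" for w
    using sums_unique2[OF sm[OF that]] dz by simp
  have "s = t"
  proof (rule ccontr)
    assume "s \<noteq> t"
    then have "s < t" using st by simp
    define \<tau> where "\<tau> = min (s + r / 2) t"
    have "\<tau> \<in> A"
      unfolding A_def
    proof (intro CollectI conjI allI impI)
      show "0 \<le> \<tau>" "\<tau> \<le> t" using s0 r \<open>s < t\<close> by (auto simp: \<tau>_def)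
      fix u assume u: "0 \<le> u \<and> u \<le> \<tau>"
      show "D u = 0"
      proof (cases "u < s")
        case True then show ?thesis using below u by auto
      next
        case False
        then have "\<bar>u - s\<bar> < r" using u r by (auto simp: \<tau>_def)
        then show ?thesis using near[of "u - s"] by simp
      qed
    qed
    then have "\<tau> \<le> s" unfolding s_def using cSup_upper[OF _ bdd] by blast
    then show False using r \<open>s < t\<close> by (auto simp: \<tau>_def)
  qed
  then show ?thesis using near[of 0] r by simp
qed

lemma deriv0_const:
  fixes f :: "real \<Rightarrow> real"
  assumes "\<And>x. (f has_real_derivative 0) (at x)"
  shows "f x = f y"
  using DERIV_isconst_all assms by blast

definition cf :: "(real \<Rightarrow> real \<Rightarrow> real \<Rightarrow> real) \<Rightarrow> real \<Rightarrow> real \<Rightarrow> nat \<Rightarrow> real" where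
  "cf F I \<theta> = (SOME d. pser (F I \<theta>) d)"

context
  fixes F :: "real \<Rightarrow> real \<Rightarrow> real \<Rightarrow> real" and \<epsilon>0 \<beta> :: real
  assumes e0: "\<epsilon>0 > 0"
    and an: "real_analytic3_on F (UNIV \<times> UNIV \<times> {-\<epsilon>0<..<\<epsilon>0})"
    and per: "\<forall>I \<theta>. \<forall>\<epsilon>\<in>{-\<epsilon>0<..<\<epsilon>0}. F I (\<theta> + 2 * pi) \<epsilon> = F I \<theta> \<epsilon>"
    and fi: "\<forall>\<epsilon>\<in>{-\<epsilon>0<..<\<epsilon>0}. first_integral \<beta> \<epsilon> (\<lambda>I \<theta>. F I \<theta> \<epsilon>)"
begin

lemma pser_exists: "\<exists>d. pser (F I \<theta>) d"
proof -
  obtain \<rho> a where \<rho>: "\<rho> > 0"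
    and hs: "\<And>u v w. \<bar>u\<bar> \<le> \<rho> \<Longrightarrow> \<bar>v\<bar> \<le> \<rho> \<Longrightarrow> \<bar>w\<bar> \<le> \<rho> \<Longrightarrow>
       ((\<lambda>(i,j,k). a (i,j,k) * u ^ i * v ^ j * w ^ k) has_sum F (I + u) (\<theta> + v) (0 + w)) UNIV"
    and inU: "\<And>u v w. \<bar>u\<bar> \<le> \<rho> \<Longrightarrow> \<bar>v\<bar> \<le> \<rho> \<Longrightarrow> \<bar>w\<bar> \<le> \<rho> \<Longrightarrow> (I + u, \<theta> + v, 0 + w) \<in> UNIV \<times> UNIV \<times> {-\<epsilon>0<..<\<epsilon>0}"
    and maj: "(\<lambda>(i,j,k). \<bar>a (i,j,k)\<bar> * \<rho> ^ i * \<rho> ^ j * \<rho> ^ k) summable_on UNIV"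
    apply (rule local_data[OF an, of I \<theta> 0])
    using e0 apply simp
    apply (rule that; assumption)
    done
  have "pser (F I \<theta>) (\<lambda>k. a (0,0,k))"
    unfolding pser_def using slice00[OF \<rho> maj hs] \<rho> by (intro exI[of _ \<rho>]) auto
  then show ?thesis by blast
qed

lemma cf_pser: "pser (F I \<theta>) (cf F I \<theta>)"
  unfolding cf_def using someI_ex[OF pser_exists] .

lemma cf_eq: "pser (F I \<theta>) d \<Longrightarrow> cf F I \<theta> = d"
  using pser_unique[OF cf_pser] by blast

lemma cf_per: "cf F I (\<theta> + 2 * pi) = cf F I \<theta>"
proof (rule cf_eq)
  obtain r where r: "r > 0" "\<And>w. \<bar>w\<bar> < r \<Longrightarrow> (\<lambda>k. cf F I \<theta> k * w ^ k) sums F I \<theta> w"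
    using cf_pser[of I \<theta>] unfolding pser_def by blast
  show "pser (F I (\<theta> + 2 * pi)) (cf F I \<theta>)"
    unfolding pser_def
  proof (intro exI[of _ "min r \<epsilon>0"] conjI allI impI)
    show "min r \<epsilon>0 > 0" using r e0 by simp
    fix w assume "\<bar>w\<bar> < min r \<epsilon>0"
    moreover have "F I (\<theta> + 2 * pi) w = F I \<theta> w"
      using per \<open>\<bar>w\<bar> < min r \<epsilon>0\<close> by (auto simp: abs_less_iff)
    ultimately show "(\<lambda>k. cf F I \<theta> k * w ^ k) sums F I (\<theta> + 2 * pi) w"
      using r(2)[of w] by auto
  qed
qed

lemma point_facts:
  "\<exists>p q. (\<forall>k. ((\<lambda>\<theta>. cf F I0 \<theta> k) has_real_derivative p k) (at \<theta>0))
       \<and> (\<forall>k. ((\<lambda>I. cf F I \<theta>0 k) has_real_derivative q k) (at I0))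
       \<and> I0 * p 0 = 0 \<and> (\<forall>k. I0 * p (Suc k) + (\<beta> * sin \<theta>0 + 1) * q k = 0)"
proof -
  obtain \<rho> a where \<rho>: "\<rho> > 0"
    and hs: "\<And>u v w. \<bar>u\<bar> \<le> \<rho> \<Longrightarrow> \<bar>v\<bar> \<le> \<rho> \<Longrightarrow> \<bar>w\<bar> \<le> \<rho> \<Longrightarrow>
       ((\<lambda>(i,j,k). a (i,j,k) * u ^ i * v ^ j * w ^ k) has_sum F (I0 + u) (\<theta>0 + v) (0 + w)) UNIV"
    and inU: "\<And>u v w. \<bar>u\<bar> \<le> \<rho> \<Longrightarrow> \<bar>v\<bar> \<le> \<rho> \<Longrightarrow> \<bar>w\<bar> \<le> \<rho> \<Longrightarrow> (I0 + u, \<theta>0 + v, 0 + w) \<in> UNIV \<times> UNIV \<times> {-\<epsilon>0<..<\<epsilon>0}"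
    and maj: "(\<lambda>(i,j,k). \<bar>a (i,j,k)\<bar> * \<rho> ^ i * \<rho> ^ j * \<rho> ^ k) summable_on UNIV"
    apply (rule local_data[OF an, of I0 \<theta>0 0])
    using e0 apply simp
    apply (rule that; assumption)
    done
  have S: "open (ball x \<rho>)" "x \<in> ball x \<rho>" for x :: real using \<rho> by auto
  have Dth: "((\<lambda>\<theta>. cf F I0 \<theta> k) has_real_derivative a (0,1,k)) (at \<theta>0)" for k
  proof -
    define C where "C v = infsum (\<lambda>j. a (0,j,k) * v ^ j) UNIV" for v
    have cfv: "cf F I0 (\<theta>0 + v) k = C v" if "\<bar>v\<bar> < \<rho>" for v
    proof -
      have "pser (F I0 (\<theta>0 + v)) (\<lambda>k. infsum (\<lambda>j. a (0,j,k) * v ^ j) UNIV)"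
        unfolding pser_def using sliceJ[OF \<rho> maj hs, of v] that \<rho> by (intro exI[of _ \<rho>]) auto
      then show ?thesis using cf_eq by (simp add: C_def)
    qed
    have sj: "(\<lambda>j. a (0,j,k) * v ^ j) sums C v" if "\<bar>v\<bar> < \<rho>" for v
      unfolding C_def using that
      by (intro has_sum_imp_sums has_sum_infsum coefj_summable[OF \<rho> maj]) auto
    have "(C has_real_derivative a (0,1,k)) (at 0)"
      using pser_deriv0[OF \<rho> sj] by simp
    then have "((\<lambda>\<theta>. C (\<theta> - \<theta>0)) has_real_derivative a (0,1,k) * 1) (at \<theta>0)"
      by (intro DERIV_chain2[where g="\<lambda>\<theta>. \<theta> - \<theta>0"]) (auto intro!: derivative_eq_intros)
    then have "((\<lambda>\<theta>. C (\<theta> - \<theta>0)) has_real_derivative a (0,1,k)) (at \<theta>0)" by simp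
    then show ?thesis
      by (rule has_field_derivative_transform_within_open[OF _ S])
         (use cfv[of "_ - \<theta>0"] in \<open>auto simp: dist_real_def abs_minus_commute\<close>)
  qed
  have DI: "((\<lambda>I. cf F I \<theta>0 k) has_real_derivative a (1,0,k)) (at I0)" for k
  proof -
    define C where "C u = infsum (\<lambda>i. a (i,0,k) * u ^ i) UNIV" for u
    have cfv: "cf F (I0 + u) \<theta>0 k = C u" if "\<bar>u\<bar> < \<rho>" for u
    proof -
      have "pser (F (I0 + u) \<theta>0) (\<lambda>k. infsum (\<lambda>i. a (i,0,k) * u ^ i) UNIV)"
        unfolding pser_def using sliceI[OF \<rho> maj hs, of u] that \<rho> by (intro exI[of _ \<rho>]) auto
      then show ?thesis using cf_eq by (simp add: C_def)
    qed
    have si: "(\<lambda>i. a (i,0,k) * u ^ i) sums C u" if "\<bar>u\<bar> < \<rho>" for u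
      unfolding C_def using that
      by (intro has_sum_imp_sums has_sum_infsum coefi_summable[OF \<rho> maj]) auto
    have "(C has_real_derivative a (1,0,k)) (at 0)"
      using pser_deriv0[OF \<rho> si] by simp
    then have "((\<lambda>I. C (I - I0)) has_real_derivative a (1,0,k) * 1) (at I0)"
      by (intro DERIV_chain2[where g="\<lambda>I. I - I0"]) (auto intro!: derivative_eq_intros)
    then have "((\<lambda>I. C (I - I0)) has_real_derivative a (1,0,k)) (at I0)" by simp
    then show ?thesis
      by (rule has_field_derivative_transform_within_open[OF _ S])
         (use cfv[of "_ - I0"] in \<open>auto simp: dist_real_def abs_minus_commute\<close>)
  qed
  define dd where "dd k = I0 * a (0,1,k) + (\<beta> * sin \<theta>0 + 1) * (case k of 0 \<Rightarrow> 0 | Suc m \<Rightarrow> a (1,0,m))" for k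
  have ddz: "dd n = 0" for n
  proof (rule pser_zero_left[OF \<rho> \<rho>, of dd "\<lambda>_. 0"])
    fix w :: real assume w: "\<bar>w\<bar> < \<rho>"
    then have w': "\<bar>w\<bar> \<le> \<rho>" by simp
    define P where "P = infsum (\<lambda>k. a (0,1,k) * w ^ k) UNIV"
    define Q where "Q = infsum (\<lambda>k. a (1,0,k) * w ^ k) UNIV"
    have wJ: "w \<in> {-\<epsilon>0<..<\<epsilon>0}" using inU[of 0 0 w] w \<rho> by auto
    have fiw: "first_integral \<beta> (0 + w) (\<lambda>I \<theta>. F I \<theta> (0 + w))" using fi wJ by simp
    have pde: "I0 * P + (0 + w) * (\<beta> * sin \<theta>0 + 1) * Q = 0"
      unfolding P_def Q_def by (rule pde_point[OF \<rho> maj hs w' fiw])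
    have sP: "(\<lambda>k. a (0,1,k) * w ^ k) sums P"
      unfolding P_def by (intro has_sum_imp_sums has_sum_infsum coefk_summable[OF \<rho> maj w'])
    have sQ: "(\<lambda>k. a (1,0,k) * w ^ k) sums Q"
      unfolding Q_def by (intro has_sum_imp_sums has_sum_infsum coefk_summable[OF \<rho> maj w'])
    define f where "f k = (case k of 0 \<Rightarrow> 0 | Suc m \<Rightarrow> a (1,0,m)) * w ^ k" for k
    have "(\<lambda>k. f (Suc k)) sums (w * Q)"
      using sums_mult[OF sQ, of w] by (simp add: f_def algebra_simps)
    then have sf: "f sums (w * Q)" by (subst (asm) sums_Suc_iff) (simp add: f_def)
    have "(\<lambda>k. I0 * (a (0,1,k) * w ^ k) + (\<beta> * sin \<theta>0 + 1) * f k) sums (I0 * P + (\<beta> * sin \<theta>0 + 1) * (w * Q))"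
      by (intro sums_add sums_mult sP sf)
    moreover have "(\<lambda>k. I0 * (a (0,1,k) * w ^ k) + (\<beta> * sin \<theta>0 + 1) * f k) = (\<lambda>k. dd k * w ^ k)"
      by (auto simp: dd_def f_def algebra_simps split: nat.splits)
    moreover have "I0 * P + (\<beta> * sin \<theta>0 + 1) * (w * Q) = 0" using pde by (simp add: algebra_simps)
    ultimately show "(\<lambda>k. dd k * w ^ k) sums 0" by simp
  qed simp
  have p0: "I0 * a (0,1,0) = 0" using ddz[of 0] by (simp add: dd_def)
  have pS': "I0 * a (0,1,Suc k) + (\<beta> * sin \<theta>0 + 1) * a (1,0,k) = 0" for k
    using ddz[of "Suc k"] unfolding dd_def by simp
  have pS: "\<forall>k. I0 * a (0,1,Suc k) + (\<beta> * sin \<theta>0 + 1) * a (1,0,k) = 0" using pS' by blast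
  show ?thesis
    apply (rule exI[of _ "\<lambda>k. a (0,1,k)"])
    apply (rule exI[of _ "\<lambda>k. a (1,0,k)"])
    using Dth DI p0 pS by blast
qed

lemma cf_cont: "isCont (\<lambda>I. cf F I \<theta> k) z"
proof -
  obtain p q where "\<forall>k. ((\<lambda>I. cf F I \<theta> k) has_real_derivative q k) (at z)"
    using point_facts[of z \<theta>] by blast
  then show ?thesis using DERIV_isCont by blast
qed

lemma theta_const:
  assumes "k = 0 \<or> (\<forall>I \<theta>. cf F I \<theta> (k - 1) = cf F 0 0 (k - 1))"
  shows "cf F I \<theta> k = cf F I 0 k"
proof -
  have nz: "cf F I \<theta> k = cf F I 0 k" if "I \<noteq> 0" for I \<theta>
  proof -
    have "((\<lambda>\<theta>'. cf F I \<theta>' k) has_real_derivative 0) (at \<theta>')" for \<theta>'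
    proof -
      obtain p q where pq: "\<forall>k. ((\<lambda>\<theta>. cf F I \<theta> k) has_real_derivative p k) (at \<theta>')"
        "\<forall>k. ((\<lambda>I. cf F I \<theta>' k) has_real_derivative q k) (at I)"
        "I * p 0 = 0" "\<forall>k. I * p (Suc k) + (\<beta> * sin \<theta>' + 1) * q k = 0"
        using point_facts[of I \<theta>'] by blast
      have "p k = 0"
      proof (cases k)
        case 0 then show ?thesis using pq(3) that by simp
      next
        case (Suc m)
        then have cc: "\<forall>I \<theta>. cf F I \<theta> m = cf F 0 0 m" using assms by (metis diff_Suc_1 nat.distinct(1))
        have c: "(\<lambda>I. cf F I \<theta>' m) = (\<lambda>_. cf F 0 0 m)" by (rule ext) (rule cc[rule_format])
        have dc: "((\<lambda>_. cf F 0 0 m) has_real_derivative 0) (at I)" by simp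
        have "((\<lambda>I. cf F I \<theta>' m) has_real_derivative q m) (at I)" using pq(2) by blast
        then have "((\<lambda>_. cf F 0 0 m) has_real_derivative q m) (at I)" by (simp only: c)
        then have "q m = 0" using DERIV_unique[OF _ dc] by blast
        then show ?thesis using pq(4)[rule_format, of m] Suc that by simp
      qed
      then show ?thesis using pq(1)[rule_format, of k] by simp
    qed
    then show ?thesis by (rule deriv0_const)
  qed
  show ?thesis
  proof (cases "I = 0")
    case False then show ?thesis by (rule nz)
  next
    case True
    have ev: "eventually (\<lambda>x. cf F x \<theta> k = cf F x 0 k) (at (0::real))"
      unfolding eventually_at_filter by (rule always_eventually) (auto intro: nz)
    have l1: "((\<lambda>x. cf F x \<theta> k) \<longlongrightarrow> cf F 0 \<theta> k) (at 0)"
      using cf_cont[where \<theta>=\<theta> and k=k and z=0] by (simp add: isCont_def)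
    have l2: "((\<lambda>x. cf F x 0 k) \<longlongrightarrow> cf F 0 0 k) (at 0)"
      using cf_cont[where \<theta>=0 and k=k and z=0] by (simp add: isCont_def)
    have "((\<lambda>x. cf F x 0 k) \<longlongrightarrow> cf F 0 \<theta> k) (at 0)"
      using Lim_transform_eventually[OF l1 ev] .
    from tendsto_unique[OF at_neq_bot this l2] show ?thesis using True by simp
  qed
qed

lemma I_const:
  assumes th: "\<And>I \<theta>. cf F I \<theta> k = cf F I 0 k"
  shows "cf F I 0 k = cf F 0 0 k"
proof -
  have "((\<lambda>I. cf F I 0 k) has_real_derivative 0) (at I)" for I
  proof -
    obtain h where h: "((\<lambda>I. cf F I 0 k) has_real_derivative h) (at I)"
      using point_facts[of I 0] by blast
    have key: "\<exists>D. ((\<lambda>\<theta>'. cf F I \<theta>' (Suc k)) has_real_derivative D) (at \<theta>) \<and>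
                  I * D + (\<beta> * sin \<theta> + 1) * h = 0" for \<theta>
    proof -
      obtain p q where pq: "\<forall>k. ((\<lambda>\<theta>. cf F I \<theta> k) has_real_derivative p k) (at \<theta>)"
        "\<forall>k. ((\<lambda>I. cf F I \<theta> k) has_real_derivative q k) (at I)"
        "\<forall>k. I * p (Suc k) + (\<beta> * sin \<theta> + 1) * q k = 0"
        using point_facts[of I \<theta>] by blast
      have "(\<lambda>I. cf F I \<theta> k) = (\<lambda>I. cf F I 0 k)" by (rule ext) (rule th)
      moreover have "((\<lambda>I. cf F I \<theta> k) has_real_derivative q k) (at I)" using pq(2) by blast
      ultimately have "((\<lambda>I. cf F I 0 k) has_real_derivative q k) (at I)" by simp
      then have "q k = h" using DERIV_unique[OF _ h] by blast
      then show ?thesis using pq(1,3) by blast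
    qed
    have "h = 0"
    proof (cases "I = 0")
      case True
      then show ?thesis using key[of 0] by auto
    next
      case False
      have "\<forall>\<theta>. \<exists>D. ((\<lambda>\<theta>'. cf F I \<theta>' (Suc k)) has_real_derivative D) (at \<theta>) \<and>
                  I * D + (\<beta> * sin \<theta> + 1) * h = 0" using key by blast
      from choice[OF this] obtain D where D: "\<forall>\<theta>. ((\<lambda>\<theta>'. cf F I \<theta>' (Suc k)) has_real_derivative D \<theta>) (at \<theta>) \<and>
                  I * D \<theta> + (\<beta> * sin \<theta> + 1) * h = 0" by blast
      define \<psi> where "\<psi> \<theta> = I * cf F I \<theta> (Suc k) + h * (\<theta> - \<beta> * cos \<theta>)" for \<theta>
      have "(\<psi> has_real_derivative 0) (at \<theta>)" for \<theta>
      proof -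
        have d1: "((\<lambda>\<theta>. I * cf F I \<theta> (Suc k)) has_real_derivative I * D \<theta>) (at \<theta>)"
        proof -
          have "((\<lambda>\<theta>. cf F I \<theta> (Suc k)) has_real_derivative D \<theta>) (at \<theta>)" using D by blast
          from DERIV_cmult[OF this, of I] show ?thesis by simp
        qed
        have d2: "((\<lambda>\<theta>. h * (\<theta> - \<beta> * cos \<theta>)) has_real_derivative h * (1 + \<beta> * sin \<theta>)) (at \<theta>)"
          by (auto intro!: derivative_eq_intros)
        have "(\<psi> has_real_derivative I * D \<theta> + h * (1 + \<beta> * sin \<theta>)) (at \<theta>)"
          unfolding \<psi>_def by (rule DERIV_add[OF d1 d2])
        moreover have "I * D \<theta> + h * (1 + \<beta> * sin \<theta>) = 0"
          using D by (simp add: algebra_simps)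
        ultimately show ?thesis by simp
      qed
      then have "\<psi> (0 + 2 * pi) = \<psi> 0" by (rule deriv0_const)
      then have "h * (2 * pi) = 0" unfolding \<psi>_def using fun_cong[OF cf_per[of I 0], of "Suc k"]
        by (simp add: algebra_simps)
      then show ?thesis by simp
    qed
    then show ?thesis using h by simp
  qed
  then show ?thesis by (rule deriv0_const)
qed

lemma all_const: "cf F I \<theta> k = cf F 0 0 k"
proof (induction k arbitrary: I \<theta>)
  case 0
  have "cf F I \<theta> 0 = cf F I 0 0" by (rule theta_const) simp
  also have "\<dots> = cf F 0 0 0" by (rule I_const) (rule theta_const, simp)
  finally show ?case .
next
  case (Suc m)
  have h: "Suc m = 0 \<or> (\<forall>I \<theta>. cf F I \<theta> (Suc m - 1) = cf F 0 0 (Suc m - 1))" using Suc by simp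
  have "cf F I \<theta> (Suc m) = cf F I 0 (Suc m)" by (rule theta_const[OF h])
  also have "\<dots> = cf F 0 0 (Suc m)" by (rule I_const) (rule theta_const[OF h])
  finally show ?case .
qed

end

theorem proposition6p1:
  fixes \<beta> :: real
  shows "\<not> (\<exists>\<epsilon>0 > 0. \<exists>F :: real \<Rightarrow> real \<Rightarrow> real \<Rightarrow> real.
              real_analytic3_on F (UNIV \<times> UNIV \<times> {-\<epsilon>0<..<\<epsilon>0})
            \<and> (\<forall>I \<theta>. \<forall>\<epsilon>\<in>{-\<epsilon>0<..<\<epsilon>0}. F I (\<theta> + 2 * pi) \<epsilon> = F I \<theta> \<epsilon>)
            \<and> (\<forall>\<epsilon>\<in>{-\<epsilon>0<..<\<epsilon>0}. first_integral \<beta> \<epsilon> (\<lambda>I \<theta>. F I \<theta> \<epsilon>))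
            \<and> (\<exists>\<epsilon>\<in>{-\<epsilon>0<..<\<epsilon>0}. \<exists>I1 \<theta>1 I2 \<theta>2. F I1 \<theta>1 \<epsilon> \<noteq> F I2 \<theta>2 \<epsilon>))"
proof
  assume "\<exists>\<epsilon>0 > 0. \<exists>F :: real \<Rightarrow> real \<Rightarrow> real \<Rightarrow> real.
              real_analytic3_on F (UNIV \<times> UNIV \<times> {-\<epsilon>0<..<\<epsilon>0})
            \<and> (\<forall>I \<theta>. \<forall>\<epsilon>\<in>{-\<epsilon>0<..<\<epsilon>0}. F I (\<theta> + 2 * pi) \<epsilon> = F I \<theta> \<epsilon>)
            \<and> (\<forall>\<epsilon>\<in>{-\<epsilon>0<..<\<epsilon>0}. first_integral \<beta> \<epsilon> (\<lambda>I \<theta>. F I \<theta> \<epsilon>))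
            \<and> (\<exists>\<epsilon>\<in>{-\<epsilon>0<..<\<epsilon>0}. \<exists>I1 \<theta>1 I2 \<theta>2. F I1 \<theta>1 \<epsilon> \<noteq> F I2 \<theta>2 \<epsilon>)"
  then obtain \<epsilon>0 F \<epsilon>1 I1 \<theta>1 I2 \<theta>2 where e0: "\<epsilon>0 > 0"
    and an: "real_analytic3_on F (UNIV \<times> UNIV \<times> {-\<epsilon>0<..<\<epsilon>0})"
    and per: "\<forall>I \<theta>. \<forall>\<epsilon>\<in>{-\<epsilon>0<..<\<epsilon>0}. F I (\<theta> + 2 * pi) \<epsilon> = F I \<theta> \<epsilon>"
    and fi: "\<forall>\<epsilon>\<in>{-\<epsilon>0<..<\<epsilon>0}. first_integral \<beta> \<epsilon> (\<lambda>I \<theta>. F I \<theta> \<epsilon>)"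
    and e1: "\<epsilon>1 \<in> {-\<epsilon>0<..<\<epsilon>0}" and ne: "F I1 \<theta>1 \<epsilon>1 \<noteq> F I2 \<theta>2 \<epsilon>1"
    by blast
  define D where "D \<epsilon> = F I1 \<theta>1 \<epsilon> - F I2 \<theta>2 \<epsilon>" for \<epsilon>
  have ceq: "cf F I1 \<theta>1 = cf F I2 \<theta>2"
  proof (rule ext)
    fix k
    show "cf F I1 \<theta>1 k = cf F I2 \<theta>2 k"
      using all_const[OF e0 an per fi, of I1 \<theta>1 k] all_const[OF e0 an per fi, of I2 \<theta>2 k] by simp
  qed
  obtain r1 where r1: "r1 > 0" "\<And>w. \<bar>w\<bar> < r1 \<Longrightarrow> (\<lambda>k. cf F I1 \<theta>1 k * w ^ k) sums F I1 \<theta>1 w"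
    using cf_pser[OF e0 an per fi, of I1 \<theta>1] unfolding pser_def by blast
  obtain r2 where r2: "r2 > 0" "\<And>w. \<bar>w\<bar> < r2 \<Longrightarrow> (\<lambda>k. cf F I2 \<theta>2 k * w ^ k) sums F I2 \<theta>2 w"
    using cf_pser[OF e0 an per fi, of I2 \<theta>2] unfolding pser_def by blast
  have z: "D w = 0" if "\<bar>w\<bar> < min r1 r2" for w
    using sums_unique2[OF r1(2)[of w]] r2(2)[of w] that ceq by (simp add: D_def)
  have lps: "\<exists>r>0. \<exists>d. \<forall>w. \<bar>w\<bar> < r \<longrightarrow> (\<lambda>k. d k * w ^ k) sums D (e + w)"
    if "e \<in> {-\<epsilon>0<..<\<epsilon>0}" for e
  proof -
    have pe: "(I, \<theta>, e) \<in> UNIV \<times> UNIV \<times> {-\<epsilon>0<..<\<epsilon>0}" for I \<theta> :: real using that by simp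
    obtain \<rho>1 a1 where \<rho>1: "\<rho>1 > 0"
      and hs1: "\<And>u v w. \<bar>u\<bar> \<le> \<rho>1 \<Longrightarrow> \<bar>v\<bar> \<le> \<rho>1 \<Longrightarrow> \<bar>w\<bar> \<le> \<rho>1 \<Longrightarrow>
         ((\<lambda>(i,j,k). a1 (i,j,k) * u ^ i * v ^ j * w ^ k) has_sum F (I1 + u) (\<theta>1 + v) (e + w)) UNIV"
      and maj1: "(\<lambda>(i,j,k). \<bar>a1 (i,j,k)\<bar> * \<rho>1 ^ i * \<rho>1 ^ j * \<rho>1 ^ k) summable_on UNIV"
      apply (rule local_data[OF an pe[of I1 \<theta>1]])
      apply (rule that; assumption)
      done
    obtain \<rho>2 a2 where \<rho>2: "\<rho>2 > 0"
      and hs2: "\<And>u v w. \<bar>u\<bar> \<le> \<rho>2 \<Longrightarrow> \<bar>v\<bar> \<le> \<rho>2 \<Longrightarrow> \<bar>w\<bar> \<le> \<rho>2 \<Longrightarrow>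
         ((\<lambda>(i,j,k). a2 (i,j,k) * u ^ i * v ^ j * w ^ k) has_sum F (I2 + u) (\<theta>2 + v) (e + w)) UNIV"
      and maj2: "(\<lambda>(i,j,k). \<bar>a2 (i,j,k)\<bar> * \<rho>2 ^ i * \<rho>2 ^ j * \<rho>2 ^ k) summable_on UNIV"
      apply (rule local_data[OF an pe[of I2 \<theta>2]])
      apply (rule that; assumption)
      done
    show ?thesis
    proof (intro exI[of _ "min \<rho>1 \<rho>2"] exI[of _ "\<lambda>k. a1 (0,0,k) - a2 (0,0,k)"] conjI allI impI)
      show "min \<rho>1 \<rho>2 > 0" using \<rho>1 \<rho>2 by simp
      fix w :: real assume "\<bar>w\<bar> < min \<rho>1 \<rho>2"
      then have w: "\<bar>w\<bar> \<le> \<rho>1" "\<bar>w\<bar> \<le> \<rho>2" by auto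
      have "(\<lambda>k. a1 (0,0,k) * w ^ k - a2 (0,0,k) * w ^ k) sums (F I1 \<theta>1 (e + w) - F I2 \<theta>2 (e + w))"
        using sums_diff[OF slice00[OF \<rho>1 maj1 hs1 w(1)] slice00[OF \<rho>2 maj2 hs2 w(2)]] by simp
      then show "(\<lambda>k. (a1 (0,0,k) - a2 (0,0,k)) * w ^ k) sums D (e + w)"
        by (simp only: D_def left_diff_distrib)
    qed
  qed
  have "D \<epsilon>1 = 0"
  proof (cases "\<epsilon>1 \<ge> 0")
    case True
    show ?thesis
    proof (rule propagate[of \<epsilon>1 D "min r1 r2"])
      fix e assume "0 \<le> e" "e \<le> \<epsilon>1"
      then have "e \<in> {-\<epsilon>0<..<\<epsilon>0}" using e1 by auto
      then show "\<exists>r>0. \<exists>d. \<forall>w. \<bar>w\<bar> < r \<longrightarrow> (\<lambda>k. d k * w ^ k) sums D (e + w)" by (rule lps)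
    next
      show "min r1 r2 > 0" using r1 r2 by simp
    next
      show "D w = 0" if "\<bar>w\<bar> < min r1 r2" for w using z that .
    qed (use True in simp)
  next
    case False
    define D' where "D' \<epsilon> = D (- \<epsilon>)" for \<epsilon>
    have "D' (- \<epsilon>1) = 0"
    proof (rule propagate[of "- \<epsilon>1" D' "min r1 r2"])
      fix e assume e: "0 \<le> e" "e \<le> - \<epsilon>1"
      then have "- e \<in> {-\<epsilon>0<..<\<epsilon>0}" using e1 e0 by auto
      from lps[OF this] obtain r d where r: "r > 0" "\<And>w. \<bar>w\<bar> < r \<Longrightarrow> (\<lambda>k. d k * w ^ k) sums D (- e + w)"
        by blast
      show "\<exists>r>0. \<exists>d. \<forall>w. \<bar>w\<bar> < r \<longrightarrow> (\<lambda>k. d k * w ^ k) sums D' (e + w)"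
      proof (intro exI[of _ r] exI[of _ "\<lambda>k. d k * (-1) ^ k"] conjI allI impI r(1))
        fix w :: real assume "\<bar>w\<bar> < r"
        then have "\<bar>- w\<bar> < r" by simp
        then have "(\<lambda>k. d k * (- w) ^ k) sums D (- e + - w)" by (rule r(2))
        moreover have "(\<lambda>k. d k * (- w) ^ k) = (\<lambda>k. d k * (-1) ^ k * w ^ k)"
        proof (rule ext)
          fix k
          show "d k * (- w) ^ k = d k * (-1) ^ k * w ^ k"
            by (simp only: power_minus[of w k] mult.assoc)
        qed
        moreover have "D (- e + - w) = D' (e + w)" by (simp add: D'_def)
        ultimately show "(\<lambda>k. d k * (-1) ^ k * w ^ k) sums D' (e + w)" by simp
      qed
    next
      show "min r1 r2 > 0" using r1 r2 by simp
    next
      show "D' w = 0" if "\<bar>w\<bar> < min r1 r2" for w using z[of "- w"] that by (simp add: D'_def)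
    qed (use False in simp)
    then show ?thesis by (simp add: D'_def)
  qed
  then show False using ne by (simp add: D_def)
qed

end
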